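(* A $3$-cochain $f\in\mathrm{Hom}_{\mathbb{Z}G}(K_3,\mathbb{k}^* )$ is a coboundary if and only if: - for all $1\le i<j\le k$ there exist $g_{i,j}\in\mathbb{k}^*$ with $f_{i,i,j}=g_{i,j}^{m_i}$ and $f_{i,j,j}=g_{i,j}^{-m_j}$; - $f_{l,l,l}=1$ for all $1\le l\le k$; - $f_{r,s,t}=1$ for all $1\le r<s<t\le k$.
   Context: Let $\mathbb{k}$ be a field and $\mathbb{k}^*$ its multiplicative group, regarded as a trivial $G$-module, where $G=\mathbb{Z}_{m_1}\times\cdots\times\mathbb{Z}_{m_k}$ with fixed generator $g_i$ of the $i$-th factor. Put $T_i=g_i-1$ and $N_i=\sum_{j=0}^{m_i-1}g_i^j$. $K_\bullet$ is the free $\mathbb{Z}G$-resolution of $\mathbb{Z}$ with $K_p$ free on generators $\Psi(a_1,\dots,a_k)$, $a_i\ge0$, $\sum a_i=p$. Its differential is $d=\sum_i d_i$, where $d_i\Psi(a)$ equals: - $0$ if $a_i=0$; - $(-1)^{\sum_{l<i}a_l}N_i\Psi(a-\epsilon_i)$ if $a_i\ne0$ is even; - $(-1)^{\sum_{l<i}a_l}T_i\Psi(a-\epsilon_i)$ if $a_i$ is odd. Cochains are $\mathrm{Hom}_{\mathbb{Z}G}(K_\bullet,\mathbb{k}^* )$ with $d^*f=f\circ d$ (written multiplicatively); $f$ is a coboundary if $f=d^*g$ for some $g\in\mathrm{Hom}_{\mathbb{Z}G}(K_2,\mathbb{k}^* )$. Notation for generators of $K_3$: $\Psi_{r,s,t}$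 ($r<s<t$) has entry $1$ in positions $r,s,t$; $\Psi_{r,r,s}$ ($r<s$) has $2$ in position $r$ and $1$ in position $s$; $\Psi_{r,s,s}$ ($r<s$) has $1$ in position $r$ and $2$ in position $s$; $\Psi_{r,r,r}$ has $3$ in position $r$; all other entries are $0$. $f_{r,s,t}$ etc. denote the values of $f$ on these generators. *)

theory Defs
  imports Main
begin

text \<open>A multi-index a = (a_1,...,a_k) is
  a function nat => nat vanishing outside {1..k}. G = Z_{m_1} x ... x Z_{m_k}
  is represented by tuples h :: nat => nat with h i < m i on {1..k}, 0 elsewhere.\<close>

definition Gcarrier :: "(nat \<Rightarrow> nat) \<Rightarrow> nat \<Rightarrow> (nat \<Rightarrow> nat) set" where
  "Gcarrier m k = {h. (\<forall>i\<in>{1..k}. h i < m i) \<and> (\<forall>i. i \<notin> {1..k} \<longrightarrow> h i = 0)}"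

text \<open>The element g_i^j of G (j-th power of the fixed generator of the i-th factor).\<close>
definition gpow :: "(nat \<Rightarrow> nat) \<Rightarrow> nat \<Rightarrow> nat \<Rightarrow> (nat \<Rightarrow> nat)" where
  "gpow m i j = (\<lambda>l. if l = i then j mod m i else 0)"

text \<open>Integral group ring ZG: integer-valued functions on G (G is finite).\<close>
definition delta :: "(nat \<Rightarrow> nat) \<Rightarrow> (nat \<Rightarrow> nat) \<Rightarrow> int" where
  "delta h = (\<lambda>x. if x = h then 1 else 0)"

definition Telt :: "(nat \<Rightarrow> nat) \<Rightarrow> nat \<Rightarrow> (nat \<Rightarrow> nat) \<Rightarrow> int" where
  "Telt m i = (\<lambda>x. delta (gpow m i 1) x - delta (\<lambda>_. 0) x)"

definition Nelt :: "(nat \<Rightarrow> nat) \<Rightarrow> nat \<Rightarrow> (nat \<Rightarrow> nat) \<Rightarrow> int" where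
  "Nelt m i = (\<lambda>x. \<Sum>j<m i. delta (gpow m i j) x)"

text \<open>Augmentation ZG -> Z; a ZG-element x acts on the trivial module k^* by c |-> c^(aug x).\<close>
definition aug :: "(nat \<Rightarrow> nat) \<Rightarrow> nat \<Rightarrow> ((nat \<Rightarrow> nat) \<Rightarrow> int) \<Rightarrow> int" where
  "aug m k x = (\<Sum>h\<in>Gcarrier m k. x h)"

text \<open>Generators Psi(a) of K_p.\<close>
definition gens :: "nat \<Rightarrow> nat \<Rightarrow> (nat \<Rightarrow> nat) set" where
  "gens k p = {a. (\<forall>i. i \<notin> {1..k} \<longrightarrow> a i = 0) \<and> (\<Sum>i\<in>{1..k}. a i) = p}"

definition unitv :: "nat \<Rightarrow> nat \<Rightarrow> nat" where
  "unitv i = (\<lambda>l. if l = i then 1 else 0)"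

text \<open>d_i Psi(a) = (dcoef m i a) * Psi(a - e_i)  (coefficient in ZG).\<close>
definition dcoef :: "(nat \<Rightarrow> nat) \<Rightarrow> nat \<Rightarrow> (nat \<Rightarrow> nat) \<Rightarrow> (nat \<Rightarrow> nat) \<Rightarrow> int" where
  "dcoef m i a = (\<lambda>x. if a i = 0 then 0
      else (-1) ^ (\<Sum>l\<in>{1..<i}. a l) *
           (if even (a i) then Nelt m i x else Telt m i x))"

text \<open>(d^* g)(Psi(a)) = g(d Psi(a)) = prod_i g(Psi(a - e_i))^(aug(coefficient)), for g
  a ZG-homomorphism into the trivial module k^*, written multiplicatively.\<close>
definition dstar :: "(nat \<Rightarrow> nat) \<Rightarrow> nat \<Rightarrow> ((nat \<Rightarrow> nat) \<Rightarrow> 'a::field) \<Rightarrow> (nat \<Rightarrow> nat) \<Rightarrow> 'a" where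
  "dstar m k g a = (\<Prod>i\<in>{1..k}. (g (\<lambda>l. a l - unitv i l)) powi (aug m k (dcoef m i a)))"

definition is_coboundary3 :: "(nat \<Rightarrow> nat) \<Rightarrow> nat \<Rightarrow> ((nat \<Rightarrow> nat) \<Rightarrow> 'a::field) \<Rightarrow> bool" where
  "is_coboundary3 m k f \<longleftrightarrow>
     (\<exists>g. (\<forall>b\<in>gens k 2. g b \<noteq> 0) \<and> (\<forall>a\<in>gens k 3. f a = dstar m k g a))"

definition Psi_rst :: "nat \<Rightarrow> nat \<Rightarrow> nat \<Rightarrow> nat \<Rightarrow> nat" where
  "Psi_rst r s t = (\<lambda>l. if l = r \<or> l = s \<or> l = t then 1 else 0)"
definition Psi_rrs :: "nat \<Rightarrow> nat \<Rightarrow> nat \<Rightarrow> nat" where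
  "Psi_rrs r s = (\<lambda>l. if l = r then 2 else if l = s then 1 else 0)"
definition Psi_rss :: "nat \<Rightarrow> nat \<Rightarrow> nat \<Rightarrow> nat" where
  "Psi_rss r s = (\<lambda>l. if l = r then 1 else if l = s then 2 else 0)"
definition Psi_rrr :: "nat \<Rightarrow> nat \<Rightarrow> nat" where
  "Psi_rrr r = (\<lambda>l. if l = r then 3 else 0)"

end

theory Submission
  imports Defs "HOL-Library.Multiset"
begin

lemma finite_G: "finite (Gcarrier m k)"
proof -
  have "Gcarrier m k \<subseteq> {f. \<forall>x. (x \<in> {1..k} \<longrightarrow> f x \<in> (\<Union>i\<in>{1..k}. {..<m i})) \<and> (x \<notin> {1..k} \<longrightarrow> f x = 0)}"
    unfolding Gcarrier_def by fastforce
  moreover have "finite \<dots>" by (rule finite_set_of_finite_funs) auto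
  ultimately show ?thesis by (rule finite_subset)
qed

lemma sum_delta_G: "p \<in> Gcarrier m k \<Longrightarrow> (\<Sum>h\<in>Gcarrier m k. delta p h) = 1"
  using finite_G[of m k] by (simp add: delta_def)

lemma gpow_in: assumes "\<forall>i\<in>{1..k}. 0 < m i" "i \<in> {1..k}"
  shows "gpow m i j \<in> Gcarrier m k"
  using assms unfolding Gcarrier_def gpow_def by auto

lemma zero_in: "(\<lambda>_. 0) \<in> Gcarrier m k" if "\<forall>i\<in>{1..k}. 0 < m i"
  using that unfolding Gcarrier_def by auto

lemma aug_T: assumes "\<forall>i\<in>{1..k}. 0 < m i" "i \<in> {1..k}"
  shows "aug m k (Telt m i) = 0"
proof -
  have "aug m k (Telt m i) = (\<Sum>h\<in>Gcarrier m k. delta (gpow m i 1) h) - (\<Sum>h\<in>Gcarrier m k. delta (\<lambda>_. 0) h)"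
    unfolding aug_def Telt_def by (simp add: sum_subtractf)
  also have "\<dots> = 0" using sum_delta_G gpow_in[OF assms] zero_in[OF assms(1)] by simp
  finally show ?thesis .
qed

lemma aug_N: assumes "\<forall>i\<in>{1..k}. 0 < m i" "i \<in> {1..k}"
  shows "aug m k (Nelt m i) = int (m i)"
proof -
  have "aug m k (Nelt m i) = (\<Sum>j<m i. \<Sum>h\<in>Gcarrier m k. delta (gpow m i j) h)"
    unfolding aug_def Nelt_def by (rule sum.swap)
  also have "\<dots> = (\<Sum>j<m i. 1)" using sum_delta_G gpow_in[OF assms] by simp
  finally show ?thesis by simp
qed

lemma aug_d: assumes "\<forall>i\<in>{1..k}. 0 < m i" "i \<in> {1..k}"
  shows "aug m k (dcoef m i a) = (if a i = 0 \<or> odd (a i) then 0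
          else (-1) ^ (\<Sum>l\<in>{1..<i}. a l) * int (m i))"
proof -
  have lin: "aug m k (\<lambda>x. c * F x) = c * aug m k F" for c F
    unfolding aug_def by (simp add: sum_distrib_left)
  show ?thesis
  proof (cases "a i = 0")
    case True then show ?thesis unfolding dcoef_def aug_def by simp
  next
    case False
    then have "dcoef m i a = (\<lambda>x. (-1) ^ (\<Sum>l\<in>{1..<i}. a l) *
           (if even (a i) then Nelt m i x else Telt m i x))" unfolding dcoef_def by simp
    then show ?thesis using False lin aug_N[OF assms] aug_T[OF assms]
      by (cases "even (a i)") simp_all
  qed
qed

lemma dstar_eq: assumes "\<forall>i\<in>{1..k}. 0 < m i"
  shows "dstar m k g a = (\<Prod>i\<in>{1..k}. if a i = 0 \<or> odd (a i) then 1 else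
     (g (\<lambda>l. a l - unitv i l)) powi ((-1) ^ (\<Sum>l\<in>{1..<i}. a l) * int (m i)))"
  unfolding dstar_def by (rule prod.cong) (auto simp: aug_d[OF assms])

definition bv :: "nat \<Rightarrow> nat \<Rightarrow> nat \<Rightarrow> nat" where
  "bv r s = (\<lambda>l. if l = r \<or> l = s then 1 else 0)"

lemma dstar_rrr: assumes "\<forall>i\<in>{1..k}. 0 < m i"
  shows "dstar m k g (Psi_rrr r) = 1"
  unfolding dstar_eq[OF assms] Psi_rrr_def by (rule prod.neutral) auto

lemma dstar_rst: assumes "\<forall>i\<in>{1..k}. 0 < m i"
  shows "dstar m k g (Psi_rst r s t) = 1"
  unfolding dstar_eq[OF assms] Psi_rst_def by (rule prod.neutral) auto

lemma dstar_rrs: assumes "\<forall>i\<in>{1..k}. 0 < m i" "1 \<le> r" "r < s" "s \<le> k"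
  shows "dstar m k g (Psi_rrs r s) = g (bv r s) ^ m r"
proof -
  have e: "(\<lambda>l. Psi_rrs r s l - unitv r l) = bv r s"
    using assms by (auto simp: Psi_rrs_def unitv_def bv_def)
  have z: "(\<Sum>l\<in>{1..<r}. Psi_rrs r s l) = 0"
    using assms by (auto simp: Psi_rrs_def)
  have "dstar m k g (Psi_rrs r s) = (\<Prod>i\<in>{1..k}. if i = r then g (bv r s) ^ m r else 1)"
    unfolding dstar_eq[OF assms(1)]
    by (rule prod.cong) (use assms e z in \<open>auto simp: Psi_rrs_def power_int_of_nat\<close>)
  also have "\<dots> = g (bv r s) ^ m r" using assms by simp
  finally show ?thesis .
qed

lemma dstar_rss: assumes "\<forall>i\<in>{1..k}. 0 < m i" "1 \<le> r" "r < s" "s \<le> k"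
  shows "dstar m k g (Psi_rss r s) = g (bv r s) powi (- int (m s))"
proof -
  have e: "(\<lambda>l. Psi_rss r s l - unitv s l) = bv r s"
    using assms by (auto simp: Psi_rss_def unitv_def bv_def)
  have z: "(\<Sum>l\<in>{1..<s}. Psi_rss r s l) = 1"
  proof -
    have "(\<Sum>l\<in>{1..<s}. Psi_rss r s l) = (\<Sum>l\<in>{1..<s}. if l = r then 1 else 0)"
      by (rule sum.cong) (auto simp: Psi_rss_def)
    then show ?thesis using assms by simp
  qed
  have "dstar m k g (Psi_rss r s) = (\<Prod>i\<in>{1..k}. if i = s then g (bv r s) powi (- int (m s)) else 1)"
    unfolding dstar_eq[OF assms(1)]
    by (rule prod.cong) (use assms e z in \<open>auto simp: Psi_rss_def\<close>)
  also have "\<dots> = g (bv r s) powi (- int (m s))" using assms by simp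
  finally show ?thesis .
qed

lemma gens3_cases:
  assumes "a \<in> gens k 3"
  obtains r where "1\<le>r" "r\<le>k" "a = Psi_rrr r"
  | r s where "1\<le>r" "r<s" "s\<le>k" "a = Psi_rrs r s"
  | r s where "1\<le>r" "r<s" "s\<le>k" "a = Psi_rss r s"
  | r s t where "1\<le>r" "r<s" "s<t" "t\<le>k" "a = Psi_rst r s t"
proof -
  define M where "M = (\<Sum>i\<in>{1..k}. replicate_mset (a i) i)"
  have out: "\<And>i. i \<notin> {1..k} \<Longrightarrow> a i = 0" and sm: "(\<Sum>i\<in>{1..k}. a i) = 3"
    using assms unfolding gens_def by auto
  have cnt: "count M j = a j" for j
    using out[of j] by (simp add: M_def count_sum)
  have sz: "size M = 3" using sm by (simp add: M_def size_multiset_sum)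
  define xs where "xs = sorted_list_of_multiset M"
  have mx: "mset xs = M" and so: "sorted xs" unfolding xs_def by auto
  have "length xs = 3" using sz mx size_mset by metis
  then obtain x y z where xs: "xs = [x,y,z]"
    by (auto simp: numeral_3_eq_3 length_Suc_conv)
  have ae: "a j = (if j = x then 1 else 0) + (if j = y then 1 else 0) + (if j = z then 1 else 0)" for j
    using cnt[of j] mx xs by auto
  have inr: "v \<in> {1..k}" if "v \<in> {x,y,z}" for v
  proof -
    have "count M v > 0" using that mx xs by auto
    then show ?thesis using cnt out by (metis less_not_refl)
  qed
  have "x \<le> y" "y \<le> z" using so xs by auto
  then consider "x = y" "y = z" | "x = y" "y < z" | "x < y" "y = z" | "x < y" "y < z"
    by linarith
  then show ?thesis
  proof cases
    case 1
    have "a = Psi_rrr x" by (rule ext) (use 1 ae in \<open>auto simp: Psi_rrr_def\<close>)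
    then show ?thesis using that(1)[of x] inr by auto
  next
    case 2
    have "a = Psi_rrs x z" by (rule ext) (use 2 ae in \<open>auto simp: Psi_rrs_def\<close>)
    then show ?thesis using 2 that(2)[of x z] inr by auto
  next
    case 3
    have "a = Psi_rss x y" by (rule ext) (use 3 ae in \<open>auto simp: Psi_rss_def\<close>)
    then show ?thesis using 3 that(3)[of x y] inr by auto
  next
    case 4
    have "a = Psi_rst x y z" by (rule ext) (use 4 ae in \<open>auto simp: Psi_rst_def\<close>)
    then show ?thesis using 4 that(4)[of x y z] inr by auto
  qed
qed

lemma in_rrr: "1 \<le> r \<Longrightarrow> r \<le> k \<Longrightarrow> Psi_rrr r \<in> gens k 3"
  unfolding gens_def Psi_rrr_def by auto

lemma in_rrs: "1 \<le> r \<Longrightarrow> r < s \<Longrightarrow> s \<le> k \<Longrightarrow> Psi_rrs r s \<in> gens k 3"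
proof -
  assume a: "1 \<le> r" "r < s" "s \<le> k"
  have "(\<Sum>i\<in>{1..k}. Psi_rrs r s i) = (\<Sum>i\<in>{1..k}. (if i = r then 2 else 0) + (if i = s then 1 else 0))"
    by (rule sum.cong) (use a in \<open>auto simp: Psi_rrs_def\<close>)
  also have "\<dots> = 3" using a by (simp add: sum.distrib)
  finally show ?thesis using a unfolding gens_def Psi_rrs_def by auto
qed

lemma in_rss: "1 \<le> r \<Longrightarrow> r < s \<Longrightarrow> s \<le> k \<Longrightarrow> Psi_rss r s \<in> gens k 3"
proof -
  assume a: "1 \<le> r" "r < s" "s \<le> k"
  have "(\<Sum>i\<in>{1..k}. Psi_rss r s i) = (\<Sum>i\<in>{1..k}. (if i = r then 1 else 0) + (if i = s then 2 else 0))"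
    by (rule sum.cong) (use a in \<open>auto simp: Psi_rss_def\<close>)
  also have "\<dots> = 3" using a by (simp add: sum.distrib)
  finally show ?thesis using a unfolding gens_def Psi_rss_def by auto
qed

lemma in_rst: "1 \<le> r \<Longrightarrow> r < s \<Longrightarrow> s < t \<Longrightarrow> t \<le> k \<Longrightarrow> Psi_rst r s t \<in> gens k 3"
proof -
  assume a: "1 \<le> r" "r < s" "s < t" "t \<le> k"
  have "(\<Sum>i\<in>{1..k}. Psi_rst r s t i) = (\<Sum>i\<in>{1..k}. (if i = r then 1 else 0) + (if i = s then 1 else 0) + (if i = t then 1 else 0))"
    by (rule sum.cong) (use a in \<open>auto simp: Psi_rst_def\<close>)
  also have "\<dots> = 3" using a by (simp add: sum.distrib)
  finally show ?thesis using a unfolding gens_def Psi_rst_def by auto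
qed

lemma in_bv: "1 \<le> r \<Longrightarrow> r < s \<Longrightarrow> s \<le> k \<Longrightarrow> bv r s \<in> gens k 2"
proof -
  assume a: "1 \<le> r" "r < s" "s \<le> k"
  have "(\<Sum>i\<in>{1..k}. bv r s i) = (\<Sum>i\<in>{1..k}. (if i = r then 1 else 0) + (if i = s then 1 else 0))"
    by (rule sum.cong) (use a in \<open>auto simp: bv_def\<close>)
  also have "\<dots> = 2" using a by (simp add: sum.distrib)
  finally show ?thesis using a unfolding gens_def bv_def by auto
qed

lemma least_bv: assumes "r < s" shows "(LEAST l. 0 < bv r s l) = r" "(LEAST l. r < l \<and> 0 < bv r s l) = s"
  using assms by (auto intro!: Least_equality simp: bv_def)

theorem lemma2p9:
  fixes m :: "nat \<Rightarrow> nat" and k :: nat and f :: "(nat \<Rightarrow> nat) \<Rightarrow> 'a::field"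
  assumes "\<forall>i\<in>{1..k}. 0 < m i"
    and "\<forall>a\<in>gens k 3. f a \<noteq> 0"
  shows "is_coboundary3 m k f \<longleftrightarrow>
     ((\<forall>i j. 1 \<le> i \<and> i < j \<and> j \<le> k \<longrightarrow>
         (\<exists>g::'a. g \<noteq> 0 \<and> f (Psi_rrs i j) = g ^ m i \<and> f (Psi_rss i j) = g powi (- int (m j)))) \<and>
      (\<forall>l. 1 \<le> l \<and> l \<le> k \<longrightarrow> f (Psi_rrr l) = 1) \<and>
      (\<forall>r s t. 1 \<le> r \<and> r < s \<and> s < t \<and> t \<le> k \<longrightarrow> f (Psi_rst r s t) = 1))"
    (is "?L \<longleftrightarrow> ?A \<and> ?B \<and> ?C")
proof
  assume ?L
  then obtain g where g0: "\<forall>b\<in>gens k 2. g b \<noteq> 0" and fe: "\<forall>a\<in>gens k 3. f a = dstar m k g a"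
    unfolding is_coboundary3_def by blast
  have ?A
  proof (intro allI impI)
    fix i j assume h: "1 \<le> i \<and> i < j \<and> j \<le> k"
    show "\<exists>g::'a. g \<noteq> 0 \<and> f (Psi_rrs i j) = g ^ m i \<and> f (Psi_rss i j) = g powi (- int (m j))"
      by (rule exI[of _ "g (bv i j)"])
        (use h g0 fe in_bv in_rrs in_rss dstar_rrs[OF assms(1)] dstar_rss[OF assms(1)] in auto)
  qed
  moreover have ?B using fe in_rrr dstar_rrr[OF assms(1)] by auto
  moreover have ?C using fe in_rst dstar_rst[OF assms(1)] by auto
  ultimately show "?A \<and> ?B \<and> ?C" by blast
next
  assume R: "?A \<and> ?B \<and> ?C"
  define P where "P i j g \<longleftrightarrow> g \<noteq> 0 \<and> f (Psi_rrs i j) = g ^ m i \<and> f (Psi_rss i j) = g powi (- int (m j))" for i j g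
  define gg where "gg i j = (SOME g. P i j g)" for i j
  have gg: "P i j (gg i j)" if "1 \<le> i" "i < j" "j \<le> k" for i j
    unfolding gg_def by (rule someI_ex) (use R that in \<open>auto simp: P_def\<close>)
  define G :: "(nat \<Rightarrow> nat) \<Rightarrow> 'a" where "G b = (let i = (LEAST l. 0 < b l); j = (LEAST l. i < l \<and> 0 < b l) in
       if 1 \<le> i \<and> i < j \<and> j \<le> k then gg i j else 1)" for b
  have G0: "G b \<noteq> 0" for b using gg unfolding G_def Let_def P_def by auto
  have Gbv: "G (bv r s) = gg r s" if "r < s" "1 \<le> r" "s \<le> k" for r s
    using that least_bv[OF that(1)] unfolding G_def Let_def by simp
  show ?L unfolding is_coboundary3_def
  proof (intro exI[of _ G] conjI ballI)
    fix a assume a: "a \<in> gens k 3"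
    from a show "f a = dstar m k G a"
    proof (cases rule: gens3_cases)
      case (1 r) then show ?thesis using R dstar_rrr[OF assms(1)] by auto
    next
      case (2 r s) then show ?thesis using gg[of r s] Gbv[of r s] dstar_rrs[OF assms(1), of r s G] by (auto simp: P_def)
    next
      case (3 r s) then show ?thesis using gg[of r s] Gbv[of r s] dstar_rss[OF assms(1), of r s G] by (auto simp: P_def)
    next
      case (4 r s t) then show ?thesis using R dstar_rst[OF assms(1)] by auto
    qed
  qed (use G0 in auto)
qed

end
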